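(* Let $H$ be an infinite-dimensional complex Hilbert space, let $\mathcal{G}_{\infty}(H)$ be the set of all closed subspaces of $H$ whose dimension and codimension are both infinite, and let $f:\mathcal{G}_{\infty}(H)\to\mathcal{G}_{\infty}(H)$ send every pair of subspaces to an equivalent pair of subspaces. Then $f$ is inclusion preserving in both directions: for $X,Y\in\mathcal{G}_{\infty}(H)$, $X\subset Y$ if and only if $f(X)\subset f(Y)$.
   Context: Two pairs of closed subspaces are equivalent if some linear (norm-preserving, not necessarily surjective) isometry of $H$ transfers one pair (as an unordered pair) to the other; $f$ sends every pair to an equivalent pair if for all $X,Y$ there is a linear isometry $M$ with $\{f(X),f(Y)\}=\{M(X),M(Y)\}$. *)

theory Defs
  imports "HOL-Analysis.Analysis"
begin

text \<open>A complex Hilbert space: a complete real inner product space carrying a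
complex scalar multiplication extending the real one, whose norm is absolutely
homogeneous for complex scalars (so the norm comes from a complex inner product,
obtained by polarization).\<close>

class complex_hilbert = real_inner + complete_space +
  fixes cscale :: "complex \<Rightarrow> 'a \<Rightarrow> 'a"
  assumes cscale_add_right: "cscale a (x + y) = cscale a x + cscale a y"
    and cscale_add_left: "cscale (a + b) x = cscale a x + cscale b x"
    and cscale_cscale: "cscale a (cscale b x) = cscale (a * b) x"
    and cscale_one: "cscale 1 x = x"
    and scaleR_cscale: "scaleR r x = cscale (complex_of_real r) x"
    and norm_cscale: "norm (cscale a x) = cmod a * norm x"

definition csubspace :: "'a::complex_hilbert set \<Rightarrow> bool" where
  "csubspace S \<longleftrightarrow> 0 \<in> S \<and> (\<forall>x\<in>S. \<forall>y\<in>S. x + y \<in> S) \<and> (\<forall>c. \<forall>x\<in>S. cscale c x \<in> S)"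

definition cspan :: "'a::complex_hilbert set \<Rightarrow> 'a set" where
  "cspan B = {x. \<exists>F c. finite F \<and> F \<subseteq> B \<and> x = (\<Sum>b\<in>F. cscale (c b) b)}"

definition inf_dim :: "'a::complex_hilbert set \<Rightarrow> bool" where
  "inf_dim S \<longleftrightarrow> \<not> (\<exists>B. finite B \<and> S \<subseteq> cspan B)"

text \<open>Infinite codimension: H/S is infinite-dimensional, i.e. no finite set B with
S + span B = H.\<close>
definition inf_codim :: "'a::complex_hilbert set \<Rightarrow> bool" where
  "inf_codim S \<longleftrightarrow> \<not> (\<exists>B. finite B \<and> UNIV \<subseteq> cspan (S \<union> B))"

definition G_inf :: "'a::complex_hilbert set set" where
  "G_inf = {X. csubspace X \<and> closed X \<and> inf_dim X \<and> inf_codim X}"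

definition clinear_isometry :: "('a::complex_hilbert \<Rightarrow> 'a) \<Rightarrow> bool" where
  "clinear_isometry M \<longleftrightarrow> (\<forall>x y. M (x + y) = M x + M y) \<and> (\<forall>c x. M (cscale c x) = cscale c (M x))
     \<and> (\<forall>x. norm (M x) = norm x)"

end

theory Submission
  imports Defs
begin


interpretation cvs: vector_space "cscale :: complex \<Rightarrow> 'a::complex_hilbert \<Rightarrow> 'a"
  by unfold_locales (auto simp: cscale_add_right cscale_add_left cscale_cscale cscale_one)

lemma cspan_eq: "cspan B = cvs.span B"
  unfolding cspan_def cvs.span_explicit by auto

definition J :: "'a::complex_hilbert \<Rightarrow> 'a" where "J x = cscale \<i> x"

lemma cscale_real: "cscale (complex_of_real r) x = r *\<^sub>R x"
  by (simp add: scaleR_cscale)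

lemma cscale_decomp: "cscale c x = Re c *\<^sub>R x + Im c *\<^sub>R J x"
proof -
  have "c = complex_of_real (Re c) + complex_of_real (Im c) * \<i>"
    by (simp add: complex_eq_iff)
  then have "cscale c x = cscale (complex_of_real (Re c)) x + cscale (complex_of_real (Im c)) (cscale \<i> x)"
    by (metis cscale_add_left cscale_cscale)
  then show ?thesis by (simp only: cscale_real J_def)
qed

lemma J_add: "J (x + y) = J x + J y" by (simp add: J_def cscale_add_right)
lemma J_scaleR: "J (r *\<^sub>R x) = r *\<^sub>R J x"
  by (simp add: J_def scaleR_cscale cscale_cscale mult.commute)
lemma J_J: "J (J x) = - x"
proof -
  have "J (J x) = cscale (complex_of_real (-1)) x" by (simp add: J_def cscale_cscale)
  then show ?thesis by (simp add: cscale_real)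
qed
lemma norm_J: "norm (J x) = norm x" by (simp add: J_def norm_cscale)
lemma J_minus: "J (- x) = - J x" using J_scaleR[of "-1" x] by simp
lemma J_diff: "J (x - y) = J x - J y" by (metis J_add J_minus diff_conv_add_uminus)
lemma J_zero: "J 0 = 0" using J_scaleR[of 0 0] by simp

lemma inner_J_J: "J x \<bullet> J y = x \<bullet> y"
proof -
  have "norm (J x + J y) = norm (x + y)" by (metis J_add norm_J)
  then have "(J x + J y) \<bullet> (J x + J y) = (x + y) \<bullet> (x + y)"
    by (metis power2_norm_eq_inner)
  moreover have "J x \<bullet> J x = x \<bullet> x" "J y \<bullet> J y = y \<bullet> y"
    by (metis norm_J power2_norm_eq_inner)+
  ultimately show ?thesis by (simp add: inner_add_left inner_add_right inner_commute)
qed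

lemma inner_J_left: "J x \<bullet> y = - (x \<bullet> J y)"
proof -
  have "J x \<bullet> y = J (J x) \<bullet> J y" by (simp add: inner_J_J)
  then show ?thesis by (simp add: J_J)
qed

lemma inner_J_self: "x \<bullet> J x = 0"
  using inner_J_left[of x x] by (simp add: inner_commute)

lemma inner_cscale_right: "x \<bullet> cscale c y = Re c * (x \<bullet> y) + Im c * (x \<bullet> J y)"
  by (simp add: cscale_decomp inner_add_right)
lemma inner_cscale_left: "cscale c x \<bullet> y = Re c * (x \<bullet> y) - Im c * (x \<bullet> J y)"
  by (simp add: cscale_decomp inner_add_left inner_J_left)

lemma J_cscale: "J (cscale c x) = cscale c (J x)"
  by (simp add: J_def cscale_cscale mult.commute)

definition corth :: "'a::complex_hilbert set \<Rightarrow> 'a set" where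
  "corth S = {x. \<forall>s\<in>S. x \<bullet> s = 0 \<and> x \<bullet> J s = 0}"

lemma corth_cscale: "x \<in> corth S \<Longrightarrow> s \<in> S \<Longrightarrow> x \<bullet> cscale c s = 0"
  by (simp add: corth_def inner_cscale_right)

lemma inner_J_swap: "y \<bullet> J x = - (x \<bullet> J y)"
  by (metis inner_commute inner_J_left)

lemma corth_sym: "x \<in> corth {y} \<longleftrightarrow> y \<in> corth {x}"
  unfolding corth_def using inner_J_swap[of x y] inner_commute[of x y] by auto

lemma corth_csubspace: "csubspace (corth S)"
  unfolding csubspace_def corth_def
  by (auto simp: inner_add_left inner_cscale_left inner_J_left J_J)

lemma corth_closed: "closed (corth S)"
proof -
  have "corth S = (\<Inter>s\<in>S. {x. x \<bullet> s = 0} \<inter> {x. x \<bullet> J s = 0})"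
    by (auto simp: corth_def)
  moreover have "closed {x. x \<bullet> (a::'a) = 0}" for a
    using closed_hyperplane[of a 0] by (simp add: inner_commute)
  ultimately show ?thesis by (auto intro!: closed_INT closed_Int)
qed

lemma corth_anti: "S \<subseteq> T \<Longrightarrow> corth T \<subseteq> corth S"
  by (auto simp: corth_def)



lemma proj_exists:
  fixes S :: "'a::{real_inner,complete_space} set"
  assumes cl: "closed S" and z: "0 \<in> S" and ad: "\<And>x y. x \<in> S \<Longrightarrow> y \<in> S \<Longrightarrow> x + y \<in> S"
    and sc: "\<And>r x. x \<in> S \<Longrightarrow> r *\<^sub>R x \<in> S"
  shows "\<exists>p\<in>S. \<forall>y\<in>S. (x - p) \<bullet> y = 0"
proof -
  define d where "d = Inf ((\<lambda>y. norm (x - y)) ` S)"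
  have bdd: "bdd_below ((\<lambda>y. norm (x - y)) ` S)" by (rule bdd_belowI[of _ 0]) auto
  have dle: "d \<le> norm (x - y)" if "y \<in> S" for y
    unfolding d_def using bdd that by (simp add: cInf_lower)
  have d0: "0 \<le> d" unfolding d_def using z by (intro cInf_greatest) auto
  have "\<exists>y\<in>S. norm (x - y) < d + 1 / (real n + 1)" for n
  proof -
    have "Inf ((\<lambda>y. norm (x - y)) ` S) < d + 1 / (real n + 1)" unfolding d_def
      by (simp add: add_pos_pos)
    then show ?thesis using z by (subst (asm) cInf_less_iff) (auto simp: bdd)
  qed
  then obtain y where yS: "\<And>n. y n \<in> S" and yd: "\<And>n. norm (x - y n) < d + 1 / (real n + 1)"
    by metis
  define e where "e n = 1 / (real n + 1)" for n
  have e01: "0 < e n" "e n \<le> 1" for n by (auto simp: e_def)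
  have key: "(norm (y n - y m))^2 \<le> (4*d+2) * (e n + e m)" for n m
  proof -
    have mid: "(1/2) *\<^sub>R (y n + y m) \<in> S" using yS ad sc by blast
    have "2 * d \<le> norm (2 *\<^sub>R x - (y n + y m))"
    proof -
      have "2 *\<^sub>R x - (y n + y m) = 2 *\<^sub>R (x - (1/2) *\<^sub>R (y n + y m))"
        by (simp add: algebra_simps)
      then show ?thesis using dle[OF mid] by simp
    qed
    then have A: "4 * d^2 \<le> (norm (2 *\<^sub>R x - (y n + y m)))^2"
    proof -
      have "(2 * d)^2 \<le> (norm (2 *\<^sub>R x - (y n + y m)))^2"
        using \<open>2 * d \<le> _\<close> d0 by (intro power_mono) auto
      then show ?thesis by (simp add: power_mult_distrib)
    qed
    have par: "(norm (y n - y m))^2 + (norm (2 *\<^sub>R x - (y n + y m)))^2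
        = 2 * (norm (x - y n))^2 + 2 * (norm (x - y m))^2"
      by (simp add: power2_norm_eq_inner inner_diff_left inner_diff_right inner_add_left
          inner_add_right inner_commute algebra_simps)
    have B: "(norm (x - y n))^2 \<le> (d + e n)^2" "(norm (x - y m))^2 \<le> (d + e m)^2"
      using yd[of n] yd[of m] by (auto simp: e_def intro!: power_mono)
    have "(d + e n)^2 \<le> d^2 + (2*d+1) * e n" using e01[of n] d0
      by (simp add: power2_eq_square algebra_simps mult_left_le)
    moreover have "(d + e m)^2 \<le> d^2 + (2*d+1) * e m" using e01[of m] d0
      by (simp add: power2_eq_square algebra_simps mult_left_le)
    ultimately show ?thesis using A par B by (simp add: algebra_simps)
  qed
  have "Cauchy y"
  proof (rule metric_CauchyI)
    fix eps :: real assume "eps > 0"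
    then have "eps^2 > 0" by simp
    obtain N :: nat where N: "2 * (4*d+2) / eps^2 < real N + 1"
      by (metis add.commute add_strict_increasing2 less_eq_real_def of_nat_0_le_iff
          reals_Archimedean2 zero_less_one)
    show "\<exists>M. \<forall>m\<ge>M. \<forall>n\<ge>M. dist (y m) (y n) < eps"
    proof (intro exI allI impI)
      fix m n assume mn: "N \<le> m" "N \<le> n"
      have "e m \<le> 1 / (real N + 1)" "e n \<le> 1 / (real N + 1)" using mn
        by (auto simp: e_def intro!: divide_left_mono)
      then have "(4*d+2) * (e m + e n) \<le> (4*d+2) * (2 / (real N + 1))" using d0
        by (intro mult_left_mono) auto
      also have "\<dots> < eps^2" using N \<open>eps^2 > 0\<close>
        by (simp add: field_simps)
      finally have "(norm (y m - y n))^2 < eps^2" using key[of m n] by simp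
      then show "dist (y m) (y n) < eps" using \<open>eps > 0\<close>
        by (simp add: dist_norm power_less_imp_less_base)
    qed
  qed
  then obtain p where yp: "y \<longlonglongrightarrow> p" using Cauchy_convergent_iff convergent_def by blast
  have pS: "p \<in> S" using cl yS yp closed_sequentially by blast
  have "norm (x - p) \<le> d"
  proof (rule tendsto_le[OF sequentially_bot])
    show "(\<lambda>n. norm (x - y n)) \<longlonglongrightarrow> norm (x - p)" by (intro tendsto_intros yp)
    show "(\<lambda>n. d + e n) \<longlonglongrightarrow> d" unfolding e_def
      using tendsto_add[OF tendsto_const LIMSEQ_inverse_real_of_nat_add[of 0]]
      by (simp add: inverse_eq_divide add.commute)
    show "\<forall>\<^sub>F n in sequentially. norm (x - y n) \<le> d + e n"
      using yd by (auto simp: e_def less_imp_le)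
  qed
  then have pmin: "norm (x - p) \<le> norm (x - z)" if "z \<in> S" for z using dle[OF that] by linarith
  show ?thesis
  proof (intro bexI[OF _ pS] ballI)
    fix v assume vS: "v \<in> S"
    show "(x - p) \<bullet> v = 0"
    proof (cases "v = 0")
      case True then show ?thesis by simp
    next
      case False
      define a where "a = (x - p) \<bullet> v"
      define t where "t = a / (v \<bullet> v)"
      have vv: "v \<bullet> v > 0" using False by simp
      have "p + t *\<^sub>R v \<in> S" using ad pS sc vS by blast
      then have "(norm (x - p))^2 \<le> (norm (x - (p + t *\<^sub>R v)))^2"
        using pmin by (simp add: power_mono)
      also have "\<dots> = (norm (x - p))^2 - 2 * t * a + t^2 * (v \<bullet> v)"
        unfolding power2_norm_eq_inner a_def
        by (simp add: inner_diff_left inner_diff_right inner_add_left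
          inner_add_right inner_commute algebra_simps power2_eq_square)
      finally have "0 \<le> - 2 * t * a + t^2 * (v \<bullet> v)" by simp
      also have "- 2 * t * a + t^2 * (v \<bullet> v) = - (a^2 / (v \<bullet> v))"
        using vv by (simp add: t_def power2_eq_square field_simps)
      finally have "a^2 \<le> 0" using vv by (simp add: divide_le_0_iff)
      then show ?thesis unfolding a_def by simp
    qed
  qed
qed

lemma proj_corth:
  fixes S :: "'a::complex_hilbert set"
  assumes "closed S" "csubspace S"
  shows "\<exists>p\<in>S. x - p \<in> corth S"
proof -
  have "\<exists>p\<in>S. \<forall>y\<in>S. (x - p) \<bullet> y = 0"
    using assms unfolding csubspace_def
    by (intro proj_exists) (auto simp: scaleR_cscale)
  then obtain p where "p \<in> S" "\<forall>y\<in>S. (x - p) \<bullet> y = 0" by blast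
  moreover have "J y \<in> S" if "y \<in> S" for y using assms that by (simp add: csubspace_def J_def)
  ultimately show ?thesis unfolding corth_def by auto
qed



lemma csubspace_iff: "csubspace S \<longleftrightarrow> cvs.subspace S"
  by (simp add: csubspace_def cvs.subspace_def)

definition orthonormal :: "'a::complex_hilbert set \<Rightarrow> bool" where
  "orthonormal E \<longleftrightarrow> (\<forall>e\<in>E. norm e = 1) \<and> (\<forall>e\<in>E. \<forall>f\<in>E. e \<noteq> f \<longrightarrow> e \<bullet> f = 0 \<and> e \<bullet> J f = 0)"

lemma orthonormal_self: "norm e = 1 \<Longrightarrow> e \<bullet> e = 1"
  by (metis norm_eq_sqrt_inner real_sqrt_eq_1_iff)

definition Q :: "'a::complex_hilbert \<Rightarrow> 'a \<Rightarrow> 'a" where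
  "Q e u = (u \<bullet> e) *\<^sub>R e + (u \<bullet> J e) *\<^sub>R J e"

lemma Q_inner: 
  assumes "orthonormal E" "e \<in> E" "f \<in> E"
  shows "Q e u \<bullet> f = (if e = f then u \<bullet> f else 0)"
    and "Q e u \<bullet> J f = (if e = f then u \<bullet> J f else 0)"
proof -
  have n: "e \<bullet> e = 1" using assms by (simp add: orthonormal_def orthonormal_self)
  have "e \<noteq> f \<Longrightarrow> e \<bullet> f = 0 \<and> e \<bullet> J f = 0" using assms by (auto simp: orthonormal_def)
  then show "Q e u \<bullet> f = (if e = f then u \<bullet> f else 0)"
    "Q e u \<bullet> J f = (if e = f then u \<bullet> J f else 0)"
    using n by (auto simp: Q_def inner_add_left inner_J_left inner_J_self inner_J_J J_J)
qed

lemma sumQ_inner: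
  assumes "orthonormal E" "finite E" "f \<in> E"
  shows "(\<Sum>e\<in>E. Q e u) \<bullet> f = u \<bullet> f" and "(\<Sum>e\<in>E. Q e u) \<bullet> J f = u \<bullet> J f"
proof -
  have "(\<Sum>e\<in>E. Q e u) \<bullet> f = (\<Sum>e\<in>E. if e = f then u \<bullet> f else 0)"
    using Q_inner(1)[OF assms(1) _ assms(3)] by (simp add: inner_sum_left)
  then show "(\<Sum>e\<in>E. Q e u) \<bullet> f = u \<bullet> f" using assms by simp
  have "(\<Sum>e\<in>E. Q e u) \<bullet> J f = (\<Sum>e\<in>E. if e = f then u \<bullet> J f else 0)"
    using Q_inner(2)[OF assms(1) _ assms(3)] by (simp add: inner_sum_left)
  then show "(\<Sum>e\<in>E. Q e u) \<bullet> J f = u \<bullet> J f" using assms by simp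
qed

lemma Q_zero: "u \<in> corth {e} \<Longrightarrow> Q e u = 0"
  by (simp add: Q_def corth_def)

lemma Q_linear: "Q e (x + y) = Q e x + Q e y" "Q e (cscale c x) = cscale c (Q e x)"
proof -
  show "Q e (x + y) = Q e x + Q e y" by (simp add: Q_def inner_add_left algebra_simps)
  have "cscale c (Q e x) = (x \<bullet> e) *\<^sub>R cscale c e + (x \<bullet> J e) *\<^sub>R cscale c (J e)"
    unfolding Q_def by (simp add: cscale_add_right scaleR_cscale cscale_cscale mult.commute)
  also have "\<dots> = (x \<bullet> e) *\<^sub>R (Re c *\<^sub>R e + Im c *\<^sub>R J e) + (x \<bullet> J e) *\<^sub>R (Re c *\<^sub>R J e - Im c *\<^sub>R e)"
    by (simp add: cscale_decomp J_J)
  also have "\<dots> = Q e (cscale c x)"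
    unfolding Q_def by (simp add: inner_cscale_left J_J inner_J_left algebra_simps)
  finally show "Q e (cscale c x) = cscale c (Q e x)" ..
qed

lemma Q_span: "Q e u \<in> cvs.span {e}"
proof -
  have "Q e u = cscale (complex_of_real (u \<bullet> e)) e + cscale (complex_of_real (u \<bullet> J e) * \<i>) e"
    by (simp add: Q_def scaleR_cscale J_def cscale_cscale)
  then show ?thesis by (simp add: cvs.span_add cvs.span_scale cvs.span_base)
qed

lemma orthonormal_independent:
  assumes "orthonormal E" shows "cvs.independent E"
  unfolding cvs.independent_explicit_finite_subsets
proof (intro allI impI ballI)
  fix S u w assume S: "S \<subseteq> E" "finite S" and sum: "(\<Sum>v\<in>S. cscale (u v) v) = 0" and w: "w \<in> S"
  have on: "orthonormal S" using assms S by (auto simp: orthonormal_def)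
  have ww: "w \<bullet> w = 1" using on w by (simp add: orthonormal_def orthonormal_self)
  have a: "cscale (u v) v \<bullet> w = (if v = w then Re (u w) else 0)" if "v \<in> S" for v
    using on that w ww by (auto simp: orthonormal_def inner_cscale_left inner_J_self)
  have b: "cscale (u v) v \<bullet> J w = (if v = w then Im (u w) else 0)" if "v \<in> S" for v
    using on that w ww by (auto simp: orthonormal_def inner_cscale_left inner_J_self J_J inner_J_J)
  have "0 = (\<Sum>v\<in>S. cscale (u v) v) \<bullet> w" by (simp add: sum)
  also have "\<dots> = Re (u w)" using a S w by (simp add: inner_sum_left)
  finally have 1: "Re (u w) = 0" ..
  have "0 = (\<Sum>v\<in>S. cscale (u v) v) \<bullet> J w" by (simp add: sum)
  also have "\<dots> = Im (u w)" using b S w by (simp add: inner_sum_left)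
  finally have 2: "Im (u w) = 0" ..
  show "u w = 0" using 1 2 by (simp add: complex_eq_iff)
qed

lemma inf_dim_of:
  assumes "orthonormal E" "infinite E" "E \<subseteq> S" shows "inf_dim S"
  unfolding inf_dim_def cspan_eq
proof
  assume "\<exists>B. finite B \<and> S \<subseteq> cvs.span B"
  then obtain B where "finite B" "S \<subseteq> cvs.span B" by blast
  then show False using cvs.independent_span_bound[OF _ orthonormal_independent[OF assms(1)], of B] assms
    by auto
qed

lemma inf_codim_of:
  assumes "orthonormal E" "infinite E" "E \<subseteq> corth S" shows "inf_codim S"
  unfolding inf_codim_def cspan_eq
proof
  assume "\<exists>B. finite B \<and> UNIV \<subseteq> cvs.span (S \<union> B)"
  then obtain B where B: "finite B" "UNIV \<subseteq> cvs.span (S \<union> B)" by blast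
  obtain Ob where Ob: "finite Ob" "card Ob = Suc (card B)" "Ob \<subseteq> E"
    using infinite_arbitrarily_large[OF assms(2)] by blast
  define P where "P x = (\<Sum>e\<in>Ob. Q e x)" for x
  have lin: "module_hom cscale cscale P"
    unfolding module_hom_iff_linear Vector_Spaces.linear_iff
    by (auto simp: P_def Q_linear sum.distrib cvs.vector_space_axioms cvs.scale_sum_right)
  have onO: "orthonormal Ob" using assms(1) Ob by (auto simp: orthonormal_def)
  have Pe: "P e = e" if "e \<in> Ob" for e
  proof -
    have "(P e - e) \<bullet> (P e - e) = 0"
    proof -
      have "P e \<in> cvs.span Ob" unfolding P_def
        using Q_span cvs.span_mono[of "{_}" Ob] that by (intro cvs.span_sum) blast
      then obtain T c where T: "finite T" "T \<subseteq> Ob" "P e = (\<Sum>b\<in>T. cscale (c b) b)"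
        unfolding cvs.span_explicit by blast
      have "P e \<bullet> f = e \<bullet> f" "P e \<bullet> J f = e \<bullet> J f" if "f \<in> Ob" for f
        using sumQ_inner[OF onO Ob(1) that] by (simp_all add: P_def)
      then have "(P e - e) \<bullet> cscale (c b) b = 0" if "b \<in> T" for b
        using T that by (auto simp: inner_cscale_right inner_diff_left)
      then have "(P e - e) \<bullet> P e = 0" using T by (simp add: inner_sum_right)
      moreover have "(P e - e) \<bullet> e = 0"
        using sumQ_inner[OF onO Ob(1) that] by (simp add: P_def inner_diff_left)
      ultimately show ?thesis by (simp add: inner_diff_right)
    qed
    then show ?thesis by simp
  qed
  have P0: "P s = 0" if "s \<in> S" for s
  proof -
    have "s \<in> corth {e}" if "e \<in> Ob" for e
      using assms(3) Ob(3) that \<open>s \<in> S\<close> corth_sym[of s e] by (auto simp: corth_def)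
    then show ?thesis by (simp add: P_def Q_zero)
  qed
  have "Ob = P ` Ob" using Pe by (auto simp: image_iff)
  also have "\<dots> \<subseteq> P ` cvs.span (S \<union> B)" using B by auto
  also have "\<dots> = cvs.span (P ` (S \<union> B))" by (simp add: module_hom.span_image[OF lin])
  also have "\<dots> \<subseteq> cvs.span (P ` B)"
  proof (rule cvs.span_minimal)
    show "P ` (S \<union> B) \<subseteq> cvs.span (P ` B)"
      using P0 by (auto simp: cvs.span_zero cvs.span_base)
  qed (rule cvs.subspace_span)
  finally have "card Ob \<le> card (P ` B)"
    using cvs.independent_span_bound[OF _ orthonormal_independent[OF onO]] B by auto
  also have "\<dots> \<le> card B" using B by (simp add: card_image_le)
  finally show False using Ob by simp
qed



lemma step_vec:
  assumes Y: "closed Y" "csubspace Y" "inf_codim Y" and E: "finite E" "orthonormal E" "E \<subseteq> corth Y"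
  shows "\<exists>v. norm v = 1 \<and> v \<in> corth Y \<and> v \<in> corth E"
proof -
  obtain x where x: "x \<notin> cvs.span (Y \<union> E)"
    using Y(3) E(1) unfolding inf_codim_def cspan_eq by blast
  obtain p where p: "p \<in> Y" "x - p \<in> corth Y" using proj_corth[OF Y(1,2)] by blast
  define u where "u = x - p"
  define w where "w = u - (\<Sum>e\<in>E. Q e u)"
  have sub: "cvs.subspace (corth Y)" using corth_csubspace csubspace_iff by blast
  have Je: "J e \<in> corth Y" if "e \<in> corth Y" for e
    using sub that unfolding J_def by (rule cvs.subspace_scale)
  have sR: "r *\<^sub>R e \<in> corth Y" if "e \<in> corth Y" for e r
    using sub that unfolding scaleR_cscale by (rule cvs.subspace_scale)
  have Qin: "Q e u \<in> corth Y" if "e \<in> E" for e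
    unfolding Q_def using that E(3) Je sR by (intro cvs.subspace_add[OF sub]) auto
  have wY: "w \<in> corth Y" unfolding w_def using p(2) u_def Qin
    by (intro cvs.subspace_diff[OF sub] cvs.subspace_sum[OF sub]) auto
  have wE: "w \<in> corth E"
    unfolding corth_def w_def using sumQ_inner[OF E(2) E(1)] by (auto simp: inner_diff_left)
  have w0: "w \<noteq> 0"
  proof
    assume "w = 0"
    then have "x = p + (\<Sum>e\<in>E. Q e u)" unfolding w_def u_def by (simp add: algebra_simps)
    moreover have "p \<in> cvs.span (Y \<union> E)" using p(1) by (simp add: cvs.span_base)
    moreover have "(\<Sum>e\<in>E. Q e u) \<in> cvs.span (Y \<union> E)"
    proof (rule cvs.span_sum)
      fix e assume "e \<in> E"
      then show "Q e u \<in> cvs.span (Y \<union> E)"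
        using Q_span[of e u] cvs.span_mono[of "{e}" "Y \<union> E"] by blast
    qed
    ultimately show False using x cvs.span_add by metis
  qed
  define v where "v = (1 / norm w) *\<^sub>R w"
  have "norm v = 1" using w0 by (simp add: v_def)
  moreover have "v \<in> corth Y" using wY sR by (simp add: v_def)
  moreover have "v \<in> corth E" using wE by (auto simp: v_def corth_def)
  ultimately show ?thesis by blast
qed

lemma seq_exists:
  assumes Y: "closed Y" "csubspace Y" "inf_codim Y"
  shows "\<exists>v::nat \<Rightarrow> 'a::complex_hilbert. (\<forall>n. norm (v n) = 1) \<and> (\<forall>n. v n \<in> corth Y)
           \<and> (\<forall>i j. i \<noteq> j \<longrightarrow> v i \<in> corth {v j})"
proof -
  define good where "good S w \<longleftrightarrow> norm w = 1 \<and> w \<in> corth Y \<and> w \<in> corth S" for S and w :: 'a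
  define L where "L = rec_nat [] (\<lambda>n l. l @ [SOME w. good (set l) w])"
  have L0: "L 0 = []" and LS: "L (Suc n) = L n @ [SOME w. good (set (L n)) w]" for n
    by (simp_all add: L_def)
  have inv: "orthonormal (set (L n)) \<and> set (L n) \<subseteq> corth Y \<and> length (L n) = n" for n
  proof (induction n)
    case 0 then show ?case by (simp add: L0 orthonormal_def)
  next
    case (Suc n)
    define w where "w = (SOME w. good (set (L n)) w)"
    have "\<exists>w. good (set (L n)) w" unfolding good_def using Suc by (intro step_vec[OF Y]) auto
    then have g: "good (set (L n)) w" unfolding w_def by (rule someI_ex)
    have "e \<bullet> w = 0 \<and> e \<bullet> J w = 0" if "e \<in> set (L n)" for e
      using g that corth_sym[of w e] by (auto simp: good_def corth_def)
    moreover have LSn: "set (L (Suc n)) = insert w (set (L n))" "length (L (Suc n)) = Suc n"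
      using Suc by (simp_all add: LS w_def)
    moreover have "norm w = 1" "w \<in> corth Y" "\<forall>s\<in>set (L n). w \<bullet> s = 0 \<and> w \<bullet> J s = 0"
      using g by (auto simp: good_def corth_def)
    ultimately show ?case using Suc
      unfolding LSn by (auto simp: orthonormal_def)
  qed
  have good: "good (set (L n)) (L (Suc n) ! n)" for n
  proof -
    have "\<exists>w. good (set (L n)) w" unfolding good_def using inv[of n] by (intro step_vec[OF Y]) auto
    then show ?thesis using inv[of n] by (simp add: LS nth_append someI_ex)
  qed
  have pre: "k < n \<Longrightarrow> L n ! k = L (Suc k) ! k" for k n
  proof (induction n)
    case 0 then show ?case by simp
  next
    case (Suc n)
    then show ?case using inv[of n] by (cases "k = n") (auto simp: LS nth_append)
  qed
  define v where "v k = L (Suc k) ! k" for k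
  have lt: "v j \<in> corth {v i}" if "i < j" for i j
  proof -
    have "v i \<in> set (L j)" using pre[OF that] inv[of j] that by (metis nth_mem v_def)
    then show ?thesis using good[of j] by (auto simp: good_def corth_def v_def)
  qed
  show ?thesis
  proof (intro exI conjI allI impI)
    fix n show "norm (v n) = 1" "v n \<in> corth Y" using good[of n] by (auto simp: good_def v_def)
  next
    fix i j :: nat assume "i \<noteq> j"
    then show "v i \<in> corth {v j}"
      using lt[of i j] lt[of j i] corth_sym by (cases "i < j") auto
  qed
qed

lemma seq_orthonormal:
  assumes "\<forall>n. norm (v n) = 1" "\<forall>i j. i \<noteq> j \<longrightarrow> v i \<in> corth {v j}"
  shows "orthonormal (v ` A)" "inj v"
proof -
  show "inj v"
  proof (rule injI)
    fix i j assume "v i = v j"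
    show "i = j"
    proof (rule ccontr)
      assume "i \<noteq> j"
      then have "v i \<in> corth {v j}" using assms(2) by blast
      then have "v i \<bullet> v i = 0" using \<open>v i = v j\<close> by (simp add: corth_def)
      then show False using assms(1) by (metis inner_eq_zero_iff norm_zero zero_neq_one)
    qed
  qed
  have "v e \<bullet> v f = 0 \<and> v e \<bullet> J (v f) = 0" if "v e \<noteq> v f" for e f
  proof -
    have "e \<noteq> f" using that by blast
    then have "v e \<in> corth {v f}" using assms(2) by blast
    then show ?thesis by (simp add: corth_def)
  qed
  then show "orthonormal (v ` A)" using assms(1) unfolding orthonormal_def by blast
qed



lemma corth_iff: "x \<in> corth S \<longleftrightarrow> (\<forall>s\<in>S. x \<in> corth {s})"
  by (simp add: corth_def)

lemma G_inf_nz: "S \<in> G_inf \<Longrightarrow> \<not> S \<subseteq> {0}"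
  unfolding G_inf_def inf_dim_def using cspan_eq[of "{}"] by auto

lemma inf_dim_mono: "inf_dim A \<Longrightarrow> A \<subseteq> B \<Longrightarrow> inf_dim B"
  unfolding inf_dim_def by blast

lemma inf_codim_anti: "inf_codim B \<Longrightarrow> A \<subseteq> B \<Longrightarrow> inf_codim A"
  unfolding inf_codim_def cspan_eq using cvs.span_mono[of "A \<union> _" "B \<union> _"] by blast

lemma construct:
  assumes X: "X \<in> G_inf" and Y: "Y \<in> G_inf" and XY: "X \<subseteq> Y"
  shows "\<exists>Z0 Z. Z0 \<in> G_inf \<and> Z \<in> G_inf \<and> Z0 \<subseteq> Z \<and> X \<subseteq> Z \<and> Z0 \<inter> X \<subseteq> {0} \<and> Y \<inter> Z \<subseteq> X"
proof -
  have Yp: "closed Y" "csubspace Y" "inf_codim Y" using Y by (auto simp: G_inf_def)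
  have Xp: "closed X" "csubspace X" "inf_dim X" "inf_codim X" using X by (auto simp: G_inf_def)
  from seq_exists[OF Yp] obtain v :: "nat \<Rightarrow> 'a" where vv: "(\<forall>n. norm (v n) = 1) \<and> (\<forall>n. v n \<in> corth Y)
           \<and> (\<forall>i j. i \<noteq> j \<longrightarrow> v i \<in> corth {v j})"
    ..
  have v1: "\<forall>n. norm (v n) = 1" and vY: "\<forall>n. v n \<in> corth Y"
    and vo: "\<And>i j. i \<noteq> j \<Longrightarrow> v i \<in> corth {v j}"
    using vv by simp_all
  define u where "u n = v (2 * n)" for n
  define w where "w n = v (2 * n + 1)" for n
  have u1: "\<forall>n. norm (u n) = 1" "\<forall>i j. i \<noteq> j \<longrightarrow> u i \<in> corth {u j}"
  proof -
    show "\<forall>n. norm (u n) = 1" using v1 by (simp add: u_def)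
    show "\<forall>i j. i \<noteq> j \<longrightarrow> u i \<in> corth {u j}"
    proof (intro allI impI)
      fix i j :: nat assume "i \<noteq> j"
      then have "2 * i \<noteq> 2 * j" by simp
      then show "u i \<in> corth {u j}" unfolding u_def by (rule vo)
    qed
  qed
  have w1: "\<forall>n. norm (w n) = 1" "\<forall>i j. i \<noteq> j \<longrightarrow> w i \<in> corth {w j}"
  proof -
    show "\<forall>n. norm (w n) = 1" using v1 by (simp add: w_def)
    show "\<forall>i j. i \<noteq> j \<longrightarrow> w i \<in> corth {w j}"
    proof (intro allI impI)
      fix i j :: nat assume "i \<noteq> j"
      then have "2 * i + 1 \<noteq> 2 * j + 1" by simp
      then show "w i \<in> corth {w j}" unfolding w_def by (rule vo)
    qed
  qed
  have uw: "u i \<in> corth {w j}" for i j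
  proof -
    have "2 * i \<noteq> 2 * j + 1" by presburger
    then show ?thesis unfolding u_def w_def by (rule vo)
  qed
  have onu: "orthonormal (range u)" "infinite (range u)"
    using seq_orthonormal[OF u1] range_inj_infinite by auto
  have onw: "orthonormal (range w)" "infinite (range w)"
    using seq_orthonormal[OF w1] range_inj_infinite by auto
  have uY: "u n \<in> corth Y" "w n \<in> corth Y" for n using vY by (auto simp: u_def w_def)
  define Z0 where "Z0 = corth (Y \<union> range w)"
  define Z where "Z = corth (range w \<union> (Y \<inter> corth X))"
  have Z0Z: "Z0 \<subseteq> Z" unfolding Z0_def Z_def by (rule corth_anti) auto
  have XZ: "X \<subseteq> Z"
  proof
    fix x assume x: "x \<in> X"
    then have xY: "x \<in> Y" using XY by blast
    have "x \<in> corth {w j}" for j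
      using uY(2)[of j] xY corth_sym[of x "w j"] by (auto simp: corth_def)
    moreover have "x \<in> corth {s}" if "s \<in> corth X" for s
      using that x corth_sym[of x s] by (auto simp: corth_def)
    ultimately show "x \<in> Z" unfolding Z_def by (subst corth_iff) auto
  qed
  have infdZ0: "inf_dim Z0"
  proof (rule inf_dim_of[OF onu])
    show "range u \<subseteq> Z0" unfolding Z0_def
      using uY(1) uw by (auto simp: corth_def)
  qed
  have infcZ: "inf_codim Z"
  proof (rule inf_codim_of[OF onw])
    show "range w \<subseteq> corth Z"
    proof
      fix a assume "a \<in> range w"
      then have "z \<in> corth {a}" if "z \<in> Z" for z using that unfolding Z_def corth_def by auto
      then show "a \<in> corth Z" using corth_sym by (subst corth_iff) blast
    qed
  qed
  have Z0G: "Z0 \<in> G_inf" unfolding G_inf_def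
    using infdZ0 inf_codim_anti[OF infcZ Z0Z] corth_closed corth_csubspace by (auto simp: Z0_def)
  have ZG: "Z \<in> G_inf" unfolding G_inf_def
    using infcZ inf_dim_mono[OF Xp(3) XZ] corth_closed corth_csubspace by (auto simp: Z_def)
  have Z0X: "Z0 \<inter> X \<subseteq> {0}"
  proof
    fix z assume z: "z \<in> Z0 \<inter> X"
    then have "z \<in> corth Y" "z \<in> Y" using XY by (auto simp: Z0_def corth_def)
    then have "z \<bullet> z = 0" by (auto simp: corth_def)
    then show "z \<in> {0}" by simp
  qed
  have YZ: "Y \<inter> Z \<subseteq> X"
  proof
    fix y assume y: "y \<in> Y \<inter> Z"
    obtain p where p: "p \<in> X" "y - p \<in> corth X" using proj_corth[OF Xp(1,2)] by blast
    have "y - p \<in> Y" using y p XY Yp(2) csubspace_iff cvs.subspace_diff by blast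
    then have "y \<in> corth {y - p}" using y p unfolding Z_def corth_def by auto
    then have 1: "y \<bullet> (y - p) = 0" by (simp add: corth_def)
    have 2: "p \<bullet> (y - p) = 0" using p by (auto simp: corth_def inner_commute)
    have "(y - p) \<bullet> (y - p) = 0" using 1 2 by (simp add: inner_diff_left)
    then have "y = p" by simp
    then show "y \<in> X" using p by simp
  qed
  show ?thesis using Z0G ZG Z0Z XZ Z0X YZ by blast
qed

lemma iso_inj: "clinear_isometry M \<Longrightarrow> inj M"
proof (rule injI)
  fix x y assume M: "clinear_isometry M" and e: "M x = M y"
  have add: "M (a + b) = M a + M b" for a b using M unfolding clinear_isometry_def by blast
  have nm: "norm (M a) = norm a" for a using M unfolding clinear_isometry_def by blast
  have "M (x - y) + M y = M x" using add[of "x - y" y] by simp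
  then have "M (x - y) = 0" using e by simp
  then have "norm (x - y) = 0" using nm[of "x - y"] by simp
  then show "x = y" by simp
qed

lemma iso_zero: "clinear_isometry M \<Longrightarrow> M 0 = 0"
proof -
  assume M: "clinear_isometry M"
  have "M (0 + 0) = M 0 + M 0" using M unfolding clinear_isometry_def by blast
  then show "M 0 = 0" by simp
qed

context
  fixes f :: "'a::complex_hilbert set \<Rightarrow> 'a set"
  assumes h2: "\<forall>X\<in>G_inf. f X \<in> G_inf"
    and h3: "\<forall>X\<in>G_inf. \<forall>Y\<in>G_inf. \<exists>M. clinear_isometry M \<and> {f X, f Y} = {M ` X, M ` Y}"
begin

lemma getM:
  assumes "A \<in> G_inf" "B \<in> G_inf"
  obtains M where "inj M" "M 0 = 0" "(f A = M ` A \<and> f B = M ` B) \<or> (f A = M ` B \<and> f B = M ` A)"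
proof -
  have "\<exists>M. clinear_isometry M \<and> {f A, f B} = {M ` A, M ` B}"
    using bspec[OF bspec[OF h3 assms(1)] assms(2)] .
  then obtain M where M: "clinear_isometry M" "{f A, f B} = {M ` A, M ` B}"
    by (elim exE conjE)
  have "(f A = M ` A \<and> f B = M ` B) \<or> (f A = M ` B \<and> f B = M ` A)"
    using M(2) by (simp only: doubleton_eq_iff)
  then show ?thesis by (rule that[OF iso_inj[OF M(1)] iso_zero[OF M(1)]])
qed

lemma P1: assumes "A \<in> G_inf" "B \<in> G_inf" "f A \<subseteq> f B" shows "A \<subseteq> B \<or> B \<subseteq> A"
proof -
  obtain M where M: "inj M" "M 0 = 0" "(f A = M ` A \<and> f B = M ` B) \<or> (f A = M ` B \<and> f B = M ` A)"
    by (rule getM[OF assms(1,2)])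
  from M(3) show ?thesis
  proof
    assume "f A = M ` A \<and> f B = M ` B"
    then have "M ` A \<subseteq> M ` B" using assms(3) by simp
    then show ?thesis using inj_image_subset_iff[OF M(1)] by simp
  next
    assume "f A = M ` B \<and> f B = M ` A"
    then have "M ` B \<subseteq> M ` A" using assms(3) by simp
    then show ?thesis using inj_image_subset_iff[OF M(1)] by simp
  qed
qed

lemma P2: assumes "A \<in> G_inf" "B \<in> G_inf" "A \<subseteq> B" shows "f A \<subseteq> f B \<or> f B \<subseteq> f A"
proof -
  obtain M where M: "inj M" "M 0 = 0" "(f A = M ` A \<and> f B = M ` B) \<or> (f A = M ` B \<and> f B = M ` A)"
    by (rule getM[OF assms(1,2)])
  have "M ` A \<subseteq> M ` B" using assms(3) by (rule image_mono)
  then show ?thesis using M(3) by (elim disjE conjE) simp_all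
qed

lemma P3: assumes "A \<in> G_inf" "B \<in> G_inf" "f A = f B" shows "A = B"
proof -
  obtain M where M: "inj M" "M 0 = 0" "(f A = M ` A \<and> f B = M ` B) \<or> (f A = M ` B \<and> f B = M ` A)"
    by (rule getM[OF assms(1,2)])
  have "M ` A = M ` B" using M(3) assms(3) by (elim disjE conjE) simp_all
  then show ?thesis using inj_image_eq_iff[OF M(1)] by simp
qed

lemma P4: assumes "A \<in> G_inf" "B \<in> G_inf" "A \<inter> B \<subseteq> {0}" shows "f A \<inter> f B \<subseteq> {0}"
proof -
  obtain M where M: "inj M" "M 0 = 0" "(f A = M ` A \<and> f B = M ` B) \<or> (f A = M ` B \<and> f B = M ` A)"
    by (rule getM[OF assms(1,2)])
  have "M ` A \<inter> M ` B = M ` (A \<inter> B)" using M(1) by (simp add: image_Int)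
  also have "\<dots> \<subseteq> M ` {0}" using assms(3) by (rule image_mono)
  also have "\<dots> = {0}" using M(2) by simp
  finally have *: "M ` A \<inter> M ` B \<subseteq> {0}" .
  from M(3) show ?thesis
  proof
    assume "f A = M ` A \<and> f B = M ` B" then show ?thesis using * by simp
  next
    assume "f A = M ` B \<and> f B = M ` A" then show ?thesis using * by (simp add: Int_commute)
  qed
qed

lemma fwd:
  assumes X: "X \<in> G_inf" and Y: "Y \<in> G_inf" and XY: "X \<subseteq> Y"
  shows "f X \<subseteq> f Y"
proof (rule ccontr)
  assume nf: "\<not> f X \<subseteq> f Y"
  then have fYX: "f Y \<subseteq> f X" using P2[OF X Y XY] by simp
  from construct[OF X Y XY] obtain Z0 Z where
    H: "Z0 \<in> G_inf \<and> Z \<in> G_inf \<and> Z0 \<subseteq> Z \<and> X \<subseteq> Z \<and> Z0 \<inter> X \<subseteq> {0} \<and> Y \<inter> Z \<subseteq> X"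
    by (elim exE)
  have Z0: "Z0 \<in> G_inf" and Z: "Z \<in> G_inf" and Z0Z: "Z0 \<subseteq> Z" and XZ: "X \<subseteq> Z"
    and Z0X: "Z0 \<inter> X \<subseteq> {0}" and YZ: "Y \<inter> Z \<subseteq> X"
    using H by simp_all
  have fG: "f A \<in> G_inf" if "A \<in> G_inf" for A using h2 that by (rule bspec)
  have nz: "\<not> A \<subseteq> {0}" if "A \<in> G_inf" for A using G_inf_nz[OF that] .
  have fXZ: "f X \<subseteq> f Z"
  proof (rule ccontr)
    assume "\<not> f X \<subseteq> f Z"
    then have fZX: "f Z \<subseteq> f X" using P2[OF X Z XZ] by (simp only: de_Morgan_disj) simp
    have d: "f Z0 \<inter> f X \<subseteq> {0}" using P4[OF Z0 X Z0X] .
    show False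
    proof (cases "f Z0 \<subseteq> f Z")
      case True
      then have "f Z0 \<subseteq> f Z0 \<inter> f X" using fZX by (intro Int_greatest) (auto intro: subset_trans)
      then have "f Z0 \<subseteq> {0}" using d by (rule subset_trans)
      then show False using nz[OF fG[OF Z0]] by simp
    next
      case False
      then have "f Z \<subseteq> f Z0" using P2[OF Z0 Z Z0Z] by simp
      then have "f Z \<subseteq> f Z0 \<inter> f X" using fZX by (intro Int_greatest)
      then have "f Z \<subseteq> {0}" using d by (rule subset_trans)
      then show False using nz[OF fG[OF Z]] by simp
    qed
  qed
  have "f Y \<subseteq> f Z" using fYX fXZ by (rule subset_trans)
  then have "Y \<subseteq> Z \<or> Z \<subseteq> Y" using P1[OF Y Z] by simp
  then show False
  proof
    assume "Y \<subseteq> Z"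
    then have "Y \<subseteq> Y \<inter> Z" by simp
    then have "Y \<subseteq> X" using YZ by (rule subset_trans)
    then have "X = Y" using XY by (rule antisym[rotated])
    then show False using nf by simp
  next
    assume "Z \<subseteq> Y"
    then have "Z0 \<subseteq> Y \<inter> Z" using Z0Z by auto
    then have "Z0 \<subseteq> X" using YZ by (rule subset_trans)
    then have "Z0 \<subseteq> Z0 \<inter> X" by simp
    then have "Z0 \<subseteq> {0}" using Z0X by (rule subset_trans)
    then show False using nz[OF Z0] by simp
  qed
qed

lemma main_iff:
  assumes X: "X \<in> G_inf" and Y: "Y \<in> G_inf"
  shows "X \<subseteq> Y \<longleftrightarrow> f X \<subseteq> f Y"
proof
  assume "X \<subseteq> Y" then show "f X \<subseteq> f Y" using fwd X Y by blast
next
  assume fXY: "f X \<subseteq> f Y"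
  then have "X \<subseteq> Y \<or> Y \<subseteq> X" using P1[OF X Y] by blast
  then show "X \<subseteq> Y"
  proof
    assume "Y \<subseteq> X"
    then have "f Y \<subseteq> f X" using fwd Y X by blast
    then have "f X = f Y" using fXY by blast
    then show "X \<subseteq> Y" using P3[OF X Y] by blast
  qed
qed

end

theorem lemma1:
  fixes f :: "'a::complex_hilbert set \<Rightarrow> 'a set"
  assumes "inf_dim (UNIV :: 'a set)"
    and "\<forall>X\<in>G_inf. f X \<in> G_inf"
    and "\<forall>X\<in>G_inf. \<forall>Y\<in>G_inf. \<exists>M. clinear_isometry M \<and> {f X, f Y} = {M ` X, M ` Y}"
  shows "\<forall>X\<in>G_inf. \<forall>Y\<in>G_inf. X \<subseteq> Y \<longleftrightarrow> f X \<subseteq> f Y"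
  using main_iff[OF assms(2,3)] by blast

end
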